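(* Let $\mathcal{R}$ be a commutative ring with unity and let $P$ be a locally finite poset with at least three elements in which every maximal chain is infinite. Then for every additive biderivation $b$ of $I(P,\mathcal{R})$ there exist scalars $\lambda^i_j\in\mathcal{R}$ ($i\in\mathcal{I}$, $j\in\mathcal{J}_i$) such that for all $\alpha,\beta\in I(P,\mathcal{R})$, $$b(\alpha,\beta)=\sum_{i\in\mathcal{I}}\sum_{j\in\mathcal{J}_i}\lambda^i_j[\alpha^i_j,\beta^i_j],$$ where $\alpha^i_j=\sum_{x\le y,\ x,y\in P^i_j}\alpha_{xy}e_{xy}$ and similarly for $\beta$; i.e. $b$ is a sum of (restricted) inner biderivations.
   Context: $I(P,\mathcal{R})$ is the incidence algebra: functions $f:P\times P\to\mathcal{R}$ with $f(x,y)=0$ unless $x\le y$, with product $(fg)(x,y)=\sum_{x\le z\le y}f(x,z)g(z,y)$; $f_{xy}=f(x,y)$, $e_{xy}$ ($x\le y$) is the function equal to $1$ at $(x,y)$ and $0$ elsewhere, and sums are entrywise. $[\alpha,\beta]=\alpha\beta-\beta\alpha$. An additive biderivation is a map $b$ of two arguments, additive in each, with $b(\alpha\beta,\gamma)=\alpha b(\beta,\gamma)+b(\alpha,\gamma)\beta$ and $b(\alpha,\beta\gamma)=\beta b(\alpha,\gamma)+b(\alpha,\beta)\gamma$. The connected components $P^i$ ($i\in\mathcal{I}$) are the classes of the equivalence relation "joined by a finite sequence of successively comparable elements". A maximal chain is a totally ordered subset to which no element can be added keeping it totally ordered. For $Q=P^i$, let $L$ be its set of maximal chains; write $l'\approx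 l''$ if there exist $x<y$ with $x,y\in l'\cap l''$; call $l',l''$ connected if $l'\approx l_0\approx\cdots\approx l_n\approx l''$ for some maximal chains $l_0,\dots,l_n$; let $\{L_j\}_{j\in\mathcal{J}_i}$ be the equivalence classes and $P^i_j=\{x\in P^i: x\in l\text{ for some }l\in L_j\}$. *)

theory Defs
  imports Main
begin

text \<open>The poset P is the ambient type 'a (class order); elements of the incidence
algebra I(P,R) are functions f :: 'a => 'a => 'r vanishing off x <= y.\<close>

definition locally_finite :: "'a::order itself \<Rightarrow> bool" where
  "locally_finite _ \<longleftrightarrow> (\<forall>x y::'a. finite {x..y})"

definition incidence :: "('a::order \<Rightarrow> 'a \<Rightarrow> 'r::comm_ring_1) set" where
  "incidence = {f. \<forall>x y. \<not> x \<le> y \<longrightarrow> f x y = 0}"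

definition inc_add :: "('a \<Rightarrow> 'a \<Rightarrow> 'r::comm_ring_1) \<Rightarrow> ('a \<Rightarrow> 'a \<Rightarrow> 'r) \<Rightarrow> ('a \<Rightarrow> 'a \<Rightarrow> 'r)" where
  "inc_add f g = (\<lambda>x y. f x y + g x y)"

definition inc_mult :: "('a::order \<Rightarrow> 'a \<Rightarrow> 'r::comm_ring_1) \<Rightarrow> ('a \<Rightarrow> 'a \<Rightarrow> 'r) \<Rightarrow> ('a \<Rightarrow> 'a \<Rightarrow> 'r)" where
  "inc_mult f g = (\<lambda>x y. \<Sum>z\<in>{x..y}. f x z * g z y)"

definition inc_comm :: "('a::order \<Rightarrow> 'a \<Rightarrow> 'r::comm_ring_1) \<Rightarrow> ('a \<Rightarrow> 'a \<Rightarrow> 'r) \<Rightarrow> ('a \<Rightarrow> 'a \<Rightarrow> 'r)" where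
  "inc_comm f g = (\<lambda>x y. inc_mult f g x y - inc_mult g f x y)"

definition additive_biderivation ::
  "(('a::order \<Rightarrow> 'a \<Rightarrow> 'r::comm_ring_1) \<Rightarrow> ('a \<Rightarrow> 'a \<Rightarrow> 'r) \<Rightarrow> ('a \<Rightarrow> 'a \<Rightarrow> 'r)) \<Rightarrow> bool" where
  "additive_biderivation b \<longleftrightarrow>
     (\<forall>\<alpha>\<in>incidence. \<forall>\<beta>\<in>incidence. b \<alpha> \<beta> \<in> incidence) \<and>
     (\<forall>\<alpha>\<in>incidence. \<forall>\<alpha>'\<in>incidence. \<forall>\<beta>\<in>incidence.
        b (inc_add \<alpha> \<alpha>') \<beta> = inc_add (b \<alpha> \<beta>) (b \<alpha>' \<beta>)) \<and>
     (\<forall>\<alpha>\<in>incidence. \<forall>\<beta>\<in>incidence. \<forall>\<beta>'\<in>incidence.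
        b \<alpha> (inc_add \<beta> \<beta>') = inc_add (b \<alpha> \<beta>) (b \<alpha> \<beta>')) \<and>
     (\<forall>\<alpha>\<in>incidence. \<forall>\<beta>\<in>incidence. \<forall>\<gamma>\<in>incidence.
        b (inc_mult \<alpha> \<beta>) \<gamma> = inc_add (inc_mult \<alpha> (b \<beta> \<gamma>)) (inc_mult (b \<alpha> \<gamma>) \<beta>)) \<and>
     (\<forall>\<alpha>\<in>incidence. \<forall>\<beta>\<in>incidence. \<forall>\<gamma>\<in>incidence.
        b \<alpha> (inc_mult \<beta> \<gamma>) = inc_add (inc_mult \<beta> (b \<alpha> \<gamma>)) (inc_mult (b \<alpha> \<beta>) \<gamma>))"

definition is_chain :: "'a::order set \<Rightarrow> bool" where
  "is_chain S \<longleftrightarrow> (\<forall>x\<in>S. \<forall>y\<in>S. x \<le> y \<or> y \<le> x)"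

definition maximal_chain :: "'a::order set \<Rightarrow> bool" where
  "maximal_chain S \<longleftrightarrow> is_chain S \<and> (\<forall>z. z \<notin> S \<longrightarrow> \<not> is_chain (insert z S))"

definition chain_approx :: "'a::order set \<Rightarrow> 'a set \<Rightarrow> bool" where
  "chain_approx l1 l2 \<longleftrightarrow> maximal_chain l1 \<and> maximal_chain l2 \<and>
     (\<exists>x y. x < y \<and> x \<in> l1 \<and> x \<in> l2 \<and> y \<in> l1 \<and> y \<in> l2)"

definition chain_connected :: "'a::order set \<Rightarrow> 'a set \<Rightarrow> bool" where
  "chain_connected l1 l2 \<longleftrightarrow> (\<exists>l0. chain_approx l1 l0 \<and> chain_approx\<^sup>+\<^sup>+ l0 l2)"

text \<open>The equivalence classes L^i_j of maximal chains (over all components i at once: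
  maximal chains of distinct components are never related).\<close>
definition chain_classes :: "'a::order set set set" where
  "chain_classes = {C. \<exists>l. maximal_chain l \<and> C = {l'. maximal_chain l' \<and> chain_connected l l'}}"

definition class_support :: "'a::order set set \<Rightarrow> 'a set" where
  "class_support C = \<Union>C"

definition restrict_inc :: "'a::order set \<Rightarrow> ('a \<Rightarrow> 'a \<Rightarrow> 'r::comm_ring_1) \<Rightarrow> ('a \<Rightarrow> 'a \<Rightarrow> 'r)" where
  "restrict_inc S f = (\<lambda>x y. if x \<in> S \<and> y \<in> S then f x y else 0)"

end

theory Submission imports Defs "HOL-Library.Function_Algebras" begin

definition E :: "'a::order \<Rightarrow> 'a \<Rightarrow> 'a \<Rightarrow> 'a \<Rightarrow> 'r::comm_ring_1" where
  "E p q = (\<lambda>s t. if s = p \<and> t = q then 1 else 0)"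

lemma E_inc[simp]: "p \<le> q \<Longrightarrow> E p q \<in> incidence"
  by (auto simp: E_def incidence_def)

lemma E_same[simp]: "E p q p q = 1" by (simp add: E_def)

lemma imult_inc[simp]: "inc_mult f g \<in> incidence"
  by (auto simp: inc_mult_def incidence_def)

lemma comm_inc[simp]: "inc_comm f g \<in> incidence"
  by (auto simp: inc_comm_def inc_mult_def incidence_def)

lemma add_eq: "inc_add f g = f + g"
  by (auto simp: inc_add_def plus_fun_def)

lemma add_inc[simp]: "f \<in> incidence \<Longrightarrow> g \<in> incidence \<Longrightarrow> f + g \<in> incidence"
  by (auto simp: incidence_def)

lemma diff_inc[simp]: "f \<in> incidence \<Longrightarrow> g \<in> incidence \<Longrightarrow> f - g \<in> incidence"
  by (auto simp: incidence_def)

lemma comm_eq: "inc_comm f g = inc_mult f g - inc_mult g f"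
  by (auto simp: inc_comm_def fun_eq_iff)

lemma mult_add_right: "inc_mult f (g + h) = inc_mult f g + inc_mult f h"
  by (auto simp: inc_mult_def fun_eq_iff distrib_left sum.distrib)
lemma mult_add_left: "inc_mult (f + g) h = inc_mult f h + inc_mult g h"
  by (auto simp: inc_mult_def fun_eq_iff distrib_right sum.distrib)
lemma mult_diff_right: "inc_mult f (g - h) = inc_mult f g - inc_mult f h"
  by (auto simp: inc_mult_def fun_eq_iff right_diff_distrib sum_subtractf)
lemma mult_diff_left: "inc_mult (f - g) h = inc_mult f h - inc_mult g h"
  by (auto simp: inc_mult_def fun_eq_iff left_diff_distrib sum_subtractf)

lemma imult_assoc:
  assumes lf: "\<forall>x y::'a::order. finite {x..y}"
  shows "inc_mult (inc_mult f g) h = inc_mult f (inc_mult g h :: 'a \<Rightarrow> 'a \<Rightarrow> 'r::comm_ring_1)"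
proof (rule ext, rule ext)
  fix x y :: 'a
  have "inc_mult (inc_mult f g) h x y = (\<Sum>z\<in>{x..y}. \<Sum>w\<in>{w. w \<in> {x..y} \<and> w \<le> z}. f x w * g w z * h z y)"
    unfolding inc_mult_def
    by (rule sum.cong[OF refl]) (auto simp: sum_distrib_right intro!: sum.cong)
  also have "\<dots> = (\<Sum>w\<in>{x..y}. \<Sum>z\<in>{z. z \<in> {x..y} \<and> w \<le> z}. f x w * g w z * h z y)"
    using lf by (subst sum.swap_restrict) auto
  also have "\<dots> = inc_mult f (inc_mult g h) x y"
    unfolding inc_mult_def
    by (rule sum.cong[OF refl]) (auto simp: sum_distrib_left mult.assoc intro!: sum.cong)
  finally show "inc_mult (inc_mult f g) h x y = inc_mult f (inc_mult g h) x y" .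
qed

lemma if1mult[simp]: "(if c then 1 else 0) * (a::'r::comm_ring_1) = (if c then a else 0)"
  "a * (if c then 1 else 0) = (if c then a else 0)" by auto

lemma mult_E_left: "finite {p..t} \<Longrightarrow> inc_mult (E p q) A s t = (if s = p then (if p \<le> q \<and> q \<le> t then A q t else 0) else 0)"
  by (cases "s = p") (auto simp: inc_mult_def E_def sum.delta)

lemma mult_row: "finite {s..t} \<Longrightarrow> inc_mult A (\<lambda>s t. if s = p then R t else 0) s t = (if s \<le> p \<and> p \<le> t then A s p * R t else 0)"
  by (auto simp: inc_mult_def if_distrib sum.delta cong: if_cong)

lemma comm_diag[simp]: "inc_comm f g x x = 0"
  by (simp add: inc_comm_def inc_mult_def mult.commute)

lemma E_comm: "\<forall>x y::'a::order. finite {x..y} \<Longrightarrow> x < (y::'a) \<Longrightarrow> inc_comm (E x x) (E x y) = (E x y :: _ \<Rightarrow> _ \<Rightarrow> 'r::comm_ring_1)"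
  apply (simp add: inc_comm_def fun_eq_iff, intro allI)
  apply (subst mult_E_left, blast)+
  by (auto simp: E_def)

lemma ab: "(a::'b::ab_group_add) + p + q + d1 = a' + q + p + d2 \<Longrightarrow> d2 - d1 = a - a'"
  by (simp add: algebra_simps)
locale BD =
  fixes b :: "('a::order \<Rightarrow> 'a \<Rightarrow> 'r::comm_ring_1) \<Rightarrow> ('a \<Rightarrow> 'a \<Rightarrow> 'r) \<Rightarrow> ('a \<Rightarrow> 'a \<Rightarrow> 'r)"
  assumes lf: "\<forall>x y::'a. finite {x..y}"
    and infc: "\<forall>l::'a set. maximal_chain l \<longrightarrow> infinite l"
    and bd: "additive_biderivation b"
begin

lemma b_inc[simp]: "f \<in> incidence \<Longrightarrow> g \<in> incidence \<Longrightarrow> b f g \<in> incidence"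
  using bd by (auto simp: additive_biderivation_def)

lemma bL: "f \<in> incidence \<Longrightarrow> g \<in> incidence \<Longrightarrow> h \<in> incidence \<Longrightarrow>
  b (inc_mult f g) h = inc_mult f (b g h) + inc_mult (b f h) g"
  using bd by (auto simp: additive_biderivation_def add_eq)

lemma bR: "f \<in> incidence \<Longrightarrow> g \<in> incidence \<Longrightarrow> h \<in> incidence \<Longrightarrow>
  b f (inc_mult g h) = inc_mult g (b f h) + inc_mult (b f g) h"
  using bd by (auto simp: additive_biderivation_def add_eq)

lemmas assoc = imult_assoc[OF lf]

lemma ab2: "(a::'b::ab_group_add) + p + (q + d1) = a' + q + (p + d2) \<Longrightarrow> d2 - d1 = a - a'"
  by (simp add: algebra_simps)

lemma step1:
  assumes "x \<in> incidence" "y \<in> incidence" "u \<in> incidence" "v \<in> incidence"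
  shows "inc_mult (b x y) (inc_comm u v) = inc_mult (inc_comm x y) (b u v)"
proof -
  have e1: "b (inc_mult x u) (inc_mult y v) = inc_mult x (inc_mult y (b u v)) + inc_mult x (inc_mult (b u y) v) + (inc_mult y (inc_mult (b x v) u) + inc_mult (b x y) (inc_mult v u))"
    using assms by (subst bL) (simp_all only: bL bR imult_inc mult_add_right mult_add_left assoc)
  have e2: "b (inc_mult x u) (inc_mult y v) = inc_mult y (inc_mult x (b u v)) + inc_mult y (inc_mult (b x v) u) + (inc_mult x (inc_mult (b u y) v) + inc_mult (b x y) (inc_mult u v))"
    using assms by (subst bR) (simp_all only: bL bR imult_inc mult_add_right mult_add_left assoc)
  show ?thesis
    unfolding comm_eq mult_diff_right mult_diff_left assoc
    using ab2[OF e1[symmetric, THEN trans, OF e2]] by simp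
qed
lemma G:
  assumes "x \<in> incidence" "y \<in> incidence" "z \<in> incidence" "u \<in> incidence" "v \<in> incidence"
  shows "inc_mult (b x y) (inc_mult z (inc_comm u v)) = inc_mult (inc_comm x y) (inc_mult z (b u v))"
proof -
  have c: "inc_comm u (inc_mult z v) = inc_mult (inc_comm u z) v + inc_mult z (inc_comm u v)"
    unfolding comm_eq mult_diff_right mult_diff_left assoc by (simp add: algebra_simps)
  have s1: "inc_mult (b x y) (inc_comm u (inc_mult z v)) = inc_mult (inc_comm x y) (b u (inc_mult z v))"
    using assms by (simp add: step1)
  have s2: "inc_mult (b x y) (inc_mult (inc_comm u z) v) = inc_mult (inc_comm x y) (inc_mult (b u z) v)"
    using assms by (simp add: step1 assoc[symmetric])
  have "inc_mult (b x y) (inc_mult (inc_comm u z) v) + inc_mult (b x y) (inc_mult z (inc_comm u v))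
     = inc_mult (inc_comm x y) (inc_mult z (b u v)) + inc_mult (inc_comm x y) (inc_mult (b u z) v)"
    using s1 assms by (simp add: c bR mult_add_right)
  then show ?thesis using s2 by (simp add: algebra_simps)
qed

lemma Ef: "inc_mult (E (p::'a) q) (A::'a \<Rightarrow> 'a \<Rightarrow> 'r) = (\<lambda>s t. if s = p then (if p \<le> q \<and> q \<le> t then A q t else 0) else 0)"
proof (intro ext)
  fix s t
  have "finite {p..t}" using lf by blast
  then show "inc_mult (E p q) A s t = (if s = p then (if p \<le> q \<and> q \<le> t then A q t else 0) else 0)"
    by (rule mult_E_left)
qed

lemma rowf: "inc_mult (A::'a \<Rightarrow> 'a \<Rightarrow> 'r) (\<lambda>s t. if s = p then R t else 0) s (t::'a) = (if s \<le> p \<and> p \<le> t then A s p * R t else 0)"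
proof -
  have "finite {s..t}" using lf by blast
  then show ?thesis by (rule mult_row)
qed

definition mu :: "'a \<Rightarrow> 'a \<Rightarrow> 'r" where "mu x y = b (E x x) (E x y) x y"

lemma F1:
  assumes "s \<le> x" "x < y" "\<alpha> \<in> incidence" "\<beta> \<in> incidence"
  shows "b \<alpha> \<beta> s x = inc_comm \<alpha> \<beta> s x * mu x y"
proof -
  have "inc_mult (b \<alpha> \<beta>) (inc_mult (E x x) (inc_comm (E x x) (E x y))) s y
     = inc_mult (inc_comm \<alpha> \<beta>) (inc_mult (E x x) (b (E x x) (E x y))) s y"
    using assms by (simp add: G)
  then show ?thesis
    by (simp add: E_comm[OF lf] Ef rowf mu_def E_same assms less_imp_le)
qed

lemma F2:
  assumes "s < x" "x \<le> t" "u \<in> incidence" "v \<in> incidence"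
  shows "b u v x t = mu s x * inc_comm u v x t"
proof -
  have "inc_mult (b (E s s) (E s x)) (inc_mult (E x x) (inc_comm u v)) s t
     = inc_mult (inc_comm (E s s) (E s x)) (inc_mult (E x x) (b u v)) s t"
    using assms by (simp add: G)
  then show ?thesis
    by (simp add: E_comm[OF lf] Ef rowf mu_def E_same assms less_imp_le)
qed

lemma zorn:
  assumes "is_chain (S::'a set)"
  shows "\<exists>M. maximal_chain M \<and> S \<subseteq> M"
proof -
  let ?A = "{T::'a set. is_chain T \<and> S \<subseteq> T}"
  have "\<forall>C\<in>chains ?A. \<exists>U\<in>?A. \<forall>X\<in>C. X \<subseteq> U"
  proof
    fix C assume C: "C \<in> chains ?A"
    show "\<exists>U\<in>?A. \<forall>X\<in>C. X \<subseteq> U"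
    proof (cases "C = {}")
      case True then show ?thesis using assms by auto
    next
      case False
      have "is_chain (\<Union>C)"
        unfolding is_chain_def
      proof (intro ballI)
        fix x y assume "x \<in> \<Union>C" "y \<in> \<Union>C"
        then obtain X Y where XY: "X \<in> C" "Y \<in> C" "x \<in> X" "y \<in> Y" by auto
        then have "X \<subseteq> Y \<or> Y \<subseteq> X" using C by (auto simp: chains_def chain_subset_def)
        then show "x \<le> y \<or> y \<le> x" using XY C by (auto simp: chains_def is_chain_def)
      qed
      moreover have "S \<subseteq> \<Union>C" using False C by (auto simp: chains_def)
      ultimately show ?thesis by blast
    qed
  qed
  from Zorn_Lemma2[OF this] obtain M where M: "M \<in> ?A" "\<forall>X\<in>?A. M \<subseteq> X \<longrightarrow> X = M" by blast
  have "maximal_chain M"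
    unfolding maximal_chain_def
  proof (intro conjI allI impI)
    show "is_chain M" using M by auto
    fix z assume "z \<notin> M"
    show "\<not> is_chain (insert z M)"
    proof
      assume "is_chain (insert z M)"
      then have "insert z M \<in> ?A" using M by auto
      then show False using M \<open>z \<notin> M\<close> by blast
    qed
  qed
  then show ?thesis using M by blast
qed

lemma ext_pt:
  assumes "(u::'a) \<le> v"
  shows "\<exists>w. w < u \<or> v < w"
proof (rule ccontr)
  assume na: "\<not> ?thesis"
  have "is_chain {u, v}" using assms by (auto simp: is_chain_def)
  then obtain M where M: "maximal_chain M" "{u,v} \<subseteq> M" using zorn by blast
  have "M \<subseteq> {u..v}"
  proof
    fix m assume "m \<in> M"
    then have "(m \<le> u \<or> u \<le> m) \<and> (m \<le> v \<or> v \<le> m)"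
      using M by (auto simp: maximal_chain_def is_chain_def)
    then show "m \<in> {u..v}" using na by (auto simp: order.order_iff_strict)
  qed
  then have "finite M" using lf finite_subset by blast
  then show False using M infc by blast
qed

lemma E_comm_pt: assumes "(x::'a) < y" shows "inc_comm (E x x) (E x y) x y = (1::'r)"
proof -
  have "inc_comm (E x x) (E x y) = (E x y :: 'a \<Rightarrow> 'a \<Rightarrow> 'r)" by (rule E_comm[OF lf assms])
  then show ?thesis by simp
qed

lemma mu_adj:
  assumes "(x::'a) < y" "y < z"
  shows "mu x y = mu y z"
proof -
  have "b (E x x) (E x y) x y = inc_comm (E x x) (E x y) x y * mu y z"
    using assms by (intro F1) auto
  then show ?thesis using assms by (simp add: mu_def E_comm_pt)
qed

lemma bpair:
  assumes "(u::'a) < v" "\<alpha> \<in> incidence" "\<beta> \<in> incidence"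
  shows "b \<alpha> \<beta> u v = mu u v * inc_comm \<alpha> \<beta> u v"
proof -
  obtain w where "w < u \<or> v < w" using ext_pt[OF less_imp_le[OF assms(1)]] by blast
  then show ?thesis
  proof
    assume "w < u" then show ?thesis using assms F2[of w u v] mu_adj[of w u v] by auto
  next
    assume "v < w" then show ?thesis using assms F1[of u v w] mu_adj[of u v w] by (auto simp: mult.commute)
  qed
qed

lemma bdiag:
  assumes "\<alpha> \<in> incidence" "\<beta> \<in> incidence"
  shows "b \<alpha> \<beta> (u::'a) u = 0"
proof -
  obtain w where "w < u \<or> u < w" using ext_pt by fastforce
  then show ?thesis
  proof
    assume "w < u" then show ?thesis using assms F2[of w u u] by auto
  next
    assume "u < w" then show ?thesis using assms F1[of u u w] by auto
  qed
qed

lemma tri: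
  assumes "(x::'a) < y" "y < z"
  shows "mu x z = mu x y \<and> mu y z = mu x y"
proof -
  have xz: "x \<le> z" using assms by auto
  obtain w where "w < x \<or> z < w" using ext_pt[OF xz] by blast
  then show ?thesis
  proof
    assume "w < x" then show ?thesis using assms mu_adj[of w x z] mu_adj[of w x y] mu_adj[of x y z] by auto
  next
    assume "z < w" then show ?thesis using assms mu_adj[of x z w] mu_adj[of y z w] mu_adj[of x y z] by auto
  qed
qed

lemma chain_mu:
  assumes l: "is_chain (l::'a set)" and "a \<in> l" "b' \<in> l" "c \<in> l" "d \<in> l" "a < b'" "c < d"
  shows "mu a b' = mu c d"
proof -
  have lfix: "mu p q = mu p q'" if "p < q" "p < q'" "q \<in> l" "q' \<in> l" for p q q'
  proof -
    have "q \<le> q' \<or> q' \<le> q" using l that by (auto simp: is_chain_def)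
    then show ?thesis using that tri[of p q q'] tri[of p q' q] by (cases "q = q'") (auto simp: order.order_iff_strict)
  qed
  have rfix: "mu p q = mu p' q" if "p < q" "p' < q" "p \<in> l" "p' \<in> l" for p p' q
  proof -
    have "p \<le> p' \<or> p' \<le> p" using l that by (auto simp: is_chain_def)
    then show ?thesis using that tri[of p p' q] tri[of p' p q] by (cases "p = p'") (auto simp: order.order_iff_strict)
  qed
  have "a \<le> d \<or> d \<le> a" using l assms by (auto simp: is_chain_def)
  then show ?thesis
  proof
    assume ad: "a \<le> d"
    show ?thesis
    proof (cases "a = d")
      case True
      then have "c < b'" using assms by auto
      then show ?thesis using lfix[of c d b'] rfix[of a b' c] assms True by auto
    next
      case False
      then have "a < d" using ad by auto
      then show ?thesis using lfix[of a b' d] rfix[of a d c] assms by auto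
    qed
  next
    assume "d \<le> a"
    then have "c < b'" using assms by auto
    then show ?thesis using lfix[of c d b'] rfix[of a b' c] assms by auto
  qed
qed

abbreviation RR :: "'a set \<Rightarrow> 'a set \<Rightarrow> bool" where "RR \<equiv> chain_approx"

lemma R_sym: "RR l1 l2 \<Longrightarrow> RR l2 l1"
  unfolding chain_approx_def by blast

lemma R_refl: "RR l1 l2 \<Longrightarrow> RR l2 l2"
  unfolding chain_approx_def by blast

lemma Rt_sym: "RR\<^sup>+\<^sup>+ l1 l2 \<Longrightarrow> RR\<^sup>+\<^sup>+ l2 l1"
proof (induction rule: tranclp.induct)
  case (r_into_trancl a b) then show ?case using R_sym by blast
next
  case (trancl_into_trancl a b c)
  then show ?case using R_sym by (meson tranclp.r_into_trancl tranclp_trans)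
qed

lemma conn_iff: "chain_connected l1 l2 \<longleftrightarrow> RR\<^sup>+\<^sup>+ l1 l2"
proof
  assume "chain_connected l1 l2"
  then obtain l0 where "RR l1 l0" "RR\<^sup>+\<^sup>+ l0 l2" unfolding chain_connected_def by blast
  then show "RR\<^sup>+\<^sup>+ l1 l2" by (meson tranclp.r_into_trancl tranclp_trans)
next
  assume a: "RR\<^sup>+\<^sup>+ l1 l2"
  show "chain_connected l1 l2"
  proof (rule converse_tranclpE[OF a])
    assume r: "RR l1 l2"
    then have "RR l2 l2" by (rule R_refl)
    then have "RR\<^sup>+\<^sup>+ l2 l2" by (rule tranclp.r_into_trancl)
    then show ?thesis using r unfolding chain_connected_def by blast
  next
    fix c assume "RR l1 c" "RR\<^sup>+\<^sup>+ c l2"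
    then show ?thesis unfolding chain_connected_def by blast
  qed
qed

lemma R_mu: "RR l1 l2 \<Longrightarrow> a \<in> l1 \<Longrightarrow> b' \<in> l1 \<Longrightarrow> a < b' \<Longrightarrow> c \<in> l2 \<Longrightarrow> d \<in> l2 \<Longrightarrow> c < d
  \<Longrightarrow> mu a b' = mu c d"
proof -
  assume as: "RR l1 l2" "a \<in> l1" "b' \<in> l1" "a < b'" "c \<in> l2" "d \<in> l2" "c < d"
  then obtain x y where xy: "x < y" "x \<in> l1" "x \<in> l2" "y \<in> l1" "y \<in> l2" and ch: "is_chain l1" "is_chain l2"
    unfolding chain_approx_def maximal_chain_def by blast
  have "mu a b' = mu x y" by (rule chain_mu[OF ch(1)]) (use as xy in auto)
  moreover have "mu c d = mu x y" by (rule chain_mu[OF ch(2)]) (use as xy in auto)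
  ultimately show ?thesis by simp
qed

lemma Rt_mu: "RR\<^sup>+\<^sup>+ l1 l2 \<Longrightarrow> \<forall>a b' c d. a \<in> l1 \<longrightarrow> b' \<in> l1 \<longrightarrow> a < b' \<longrightarrow> c \<in> l2 \<longrightarrow> d \<in> l2 \<longrightarrow> c < d
  \<longrightarrow> mu a b' = mu c d"
proof (induction rule: tranclp.induct)
  case (r_into_trancl a b) then show ?case using R_mu by blast
next
  case (trancl_into_trancl l1 m l2)
  from trancl_into_trancl(2) obtain x y where "x < y" "x \<in> m" "y \<in> m"
    unfolding chain_approx_def by blast
  show ?case
  proof (intro allI impI)
    fix a b' c d assume as: "a \<in> l1" "b' \<in> l1" "a < b'" "c \<in> l2" "d \<in> l2" "c < d"
    have "mu a b' = mu x y" using trancl_into_trancl.IH as \<open>x < y\<close> \<open>x \<in> m\<close> \<open>y \<in> m\<close> by blast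
    moreover have "mu x y = mu c d" using R_mu[OF trancl_into_trancl(2)] as \<open>x < y\<close> \<open>x \<in> m\<close> \<open>y \<in> m\<close> by blast
    ultimately show "mu a b' = mu c d" by simp
  qed
qed

definition lam :: "'a set set \<Rightarrow> 'r" where
  "lam C = (let p = (SOME p. fst p < snd p \<and> (\<exists>l\<in>C. fst p \<in> l \<and> snd p \<in> l)) in mu (fst p) (snd p))"

lemma class_conn: "C \<in> chain_classes \<Longrightarrow> l1 \<in> C \<Longrightarrow> l2 \<in> C \<Longrightarrow> RR\<^sup>+\<^sup>+ l1 l2"
  unfolding chain_classes_def conn_iff using Rt_sym tranclp_trans by fastforce

lemma lam_eq:
  assumes "C \<in> chain_classes" "l1 \<in> C" "x \<in> l1" "y \<in> l1" "(x::'a) < y"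
  shows "lam C = mu x y"
proof -
  let ?P = "\<lambda>p. fst p < snd p \<and> (\<exists>l\<in>C. fst p \<in> l \<and> snd p \<in> l)"
  have "?P (x,y)" using assms by auto
  then have "?P (SOME p. ?P p)" by (rule someI)
  then obtain l2 where l2: "l2 \<in> C" "fst (SOME p. ?P p) \<in> l2" "snd (SOME p. ?P p) \<in> l2"
    "fst (SOME p. ?P p) < snd (SOME p. ?P p)" by blast
  have rt: "RR\<^sup>+\<^sup>+ l1 l2" using class_conn assms l2 by blast
  have "mu x y = mu (fst (SOME p. ?P p)) (snd (SOME p. ?P p))"
    using Rt_mu[OF rt] l2 assms by blast
  then show ?thesis unfolding lam_def Let_def by simp
qed

lemma restr_zero:
  "x \<notin> S \<or> y \<notin> S \<Longrightarrow> inc_comm (restrict_inc S f) (restrict_inc S g) x y = 0"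
  by (auto simp: inc_comm_def inc_mult_def restrict_inc_def)

lemma restr_full:
  assumes "{x..y} \<subseteq> S"
  shows "inc_comm (restrict_inc S f) (restrict_inc S g) x y = inc_comm f g x y"
proof (cases "x \<le> y")
  case True
  then have "x \<in> S" "y \<in> S" using assms by auto
  then show ?thesis using assms unfolding inc_comm_def inc_mult_def restrict_inc_def
    by (intro arg_cong2[where f = "(-)"] sum.cong) auto
next
  case False
  then show ?thesis by (simp add: inc_comm_def inc_mult_def)
qed

lemma comm_notle: "\<not> x \<le> y \<Longrightarrow> inc_comm f g x y = 0"
  by (simp add: inc_comm_def inc_mult_def)

lemma below_in_chain:
  assumes A: "maximal_chain A" "(x::'a) \<in> A" and w: "w < x"
  shows "\<exists>a\<in>A. a < x"
proof (rule ccontr)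
  assume na: "\<not> ?thesis"
  have "\<forall>a\<in>A. x \<le> a" using A na by (auto simp: maximal_chain_def is_chain_def order.order_iff_strict)
  then have "is_chain (insert w A)" using A w by (auto simp: maximal_chain_def is_chain_def intro: order.strict_implies_order order.trans)
  moreover have "w \<notin> A" using na w by blast
  ultimately show False using A by (auto simp: maximal_chain_def)
qed

lemma above_in_chain:
  assumes A: "maximal_chain A" "(y::'a) \<in> A" and w: "y < w"
  shows "\<exists>a\<in>A. y < a"
proof (rule ccontr)
  assume na: "\<not> ?thesis"
  have "\<forall>a\<in>A. a \<le> y" using A na by (auto simp: maximal_chain_def is_chain_def order.order_iff_strict)
  then have "is_chain (insert w A)" using A w by (auto simp: maximal_chain_def is_chain_def intro: order.strict_implies_order order.trans)
  moreover have "w \<notin> A" using na w by blast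
  ultimately show False using A by (auto simp: maximal_chain_def)
qed

lemma mainlem:
  assumes ab: "\<alpha> \<in> incidence" "\<beta> \<in> incidence"
  shows "let t = (\<lambda>C. lam C * inc_comm (restrict_inc (class_support C) \<alpha>)
                                  (restrict_inc (class_support C) \<beta>) x y)
      in finite {C\<in>chain_classes. t C \<noteq> 0} \<and>
         b \<alpha> \<beta> x y = (\<Sum>C\<in>{C\<in>chain_classes. t C \<noteq> 0}. t C)"
proof -
  define t where "t = (\<lambda>C. lam C * inc_comm (restrict_inc (class_support C) \<alpha>)
                                  (restrict_inc (class_support C) \<beta>) x y)"
  show ?thesis unfolding t_def[symmetric] Let_def
  proof (cases "x < y")
    case False
    have t0: "t C = 0" for C
    proof (cases "x = y")
      case True then show ?thesis by (simp add: t_def)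
    next
      case False then have "\<not> x \<le> y" using \<open>\<not> x < y\<close> by auto
      then show ?thesis by (simp add: t_def comm_notle)
    qed
    have "b \<alpha> \<beta> x y = 0"
    proof (cases "x = y")
      case True then show ?thesis using bdiag ab by simp
    next
      case False then have "\<not> x \<le> y" using \<open>\<not> x < y\<close> by auto
      moreover have "b \<alpha> \<beta> \<in> incidence" using ab by simp
      ultimately show ?thesis by (simp add: incidence_def)
    qed
    then show "finite {C \<in> chain_classes. t C \<noteq> 0} \<and> b \<alpha> \<beta> x y = sum t {C \<in> chain_classes. t C \<noteq> 0}"
      using t0 by simp
  next
    case True
    have "is_chain {x, y}" using True by (auto simp: is_chain_def)
    then obtain L where L: "maximal_chain L" "{x,y} \<subseteq> L" using zorn by blast
    define C0 where "C0 = {l'. maximal_chain l' \<and> chain_connected L l'}"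
    have C0c: "C0 \<in> chain_classes" unfolding C0_def chain_classes_def using L by blast
    have RLL: "RR L L" using L True unfolding chain_approx_def by blast
    have LC0: "L \<in> C0" unfolding C0_def conn_iff using L RLL by blast
    have lam0: "lam C0 = mu x y" using lam_eq[OF C0c LC0] L True by auto
    have ivl: "{x..y} \<subseteq> class_support C0"
    proof
      fix z assume z: "z \<in> {x..y}"
      have "is_chain {x, z, y}" using z by (auto simp: is_chain_def intro: order.trans)
      then obtain M where M: "maximal_chain M" "{x,z,y} \<subseteq> M" using zorn by blast
      have "RR L M" using L M True unfolding chain_approx_def by blast
      then have "M \<in> C0" unfolding C0_def conn_iff using M by blast
      then show "z \<in> class_support C0" using M unfolding class_support_def by blast
    qed
    have tC0: "t C0 = b \<alpha> \<beta> x y"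
      unfolding t_def restr_full[OF ivl] lam0 using bpair[OF True ab] by simp
    have uniq: "C = C0" if C: "C \<in> chain_classes" "t C \<noteq> 0" for C
    proof -
      have "x \<in> class_support C \<and> y \<in> class_support C"
        using C(2) restr_zero unfolding t_def by (metis mult_zero_right)
      then obtain A B where AB: "A \<in> C" "x \<in> A" "B \<in> C" "y \<in> B"
        unfolding class_support_def by blast
      obtain l where l: "maximal_chain l" "C = {l'. maximal_chain l' \<and> chain_connected l l'}"
        using C(1) unfolding chain_classes_def by blast
      have Amax: "maximal_chain A" "maximal_chain B" using AB l by auto
      have "RR\<^sup>+\<^sup>+ A L \<or> RR\<^sup>+\<^sup>+ B L"
      proof -
        obtain w where "w < x \<or> y < w" using ext_pt[OF less_imp_le[OF True]] by blast
        then show ?thesis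
        proof
          assume "w < x"
          then obtain a where a: "a \<in> A" "a < x" using below_in_chain Amax AB by blast
          have "is_chain {a, x, y}" using a True by (auto simp: is_chain_def intro: order.strict_implies_order order.strict_trans)
          then obtain M where M: "maximal_chain M" "{a,x,y} \<subseteq> M" using zorn by blast
          have "RR A M" using Amax M a AB unfolding chain_approx_def by blast
          moreover have "RR M L" using L M True unfolding chain_approx_def by blast
          ultimately show ?thesis by (meson tranclp.r_into_trancl tranclp_trans)
        next
          assume "y < w"
          then obtain c where c: "c \<in> B" "y < c" using above_in_chain Amax AB by blast
          have "is_chain {x, y, c}" using c True by (auto simp: is_chain_def intro: order.strict_implies_order order.strict_trans)
          then obtain M where M: "maximal_chain M" "{x,y,c} \<subseteq> M" using zorn by blast
          have "RR B M" using Amax M c AB unfolding chain_approx_def by blast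
          moreover have "RR M L" using L M True unfolding chain_approx_def by blast
          ultimately show ?thesis by (meson tranclp.r_into_trancl tranclp_trans)
        qed
      qed
      moreover have "RR\<^sup>+\<^sup>+ l A" "RR\<^sup>+\<^sup>+ l B" using AB l conn_iff by auto
      ultimately have lL: "RR\<^sup>+\<^sup>+ l L" using tranclp_trans by metis
      have "RR\<^sup>+\<^sup>+ l l' \<longleftrightarrow> RR\<^sup>+\<^sup>+ L l'" for l'
        using lL Rt_sym tranclp_trans by metis
      then show ?thesis unfolding l(2) C0_def conn_iff by simp
    qed
    have sub: "{C \<in> chain_classes. t C \<noteq> 0} \<subseteq> {C0}" using uniq by blast
    have "sum t {C \<in> chain_classes. t C \<noteq> 0} = t C0"
    proof (cases "t C0 = 0")
      case True
      then have "{C \<in> chain_classes. t C \<noteq> 0} = {}" using sub by blast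
      then show ?thesis using True by simp
    next
      case False
      then have "{C \<in> chain_classes. t C \<noteq> 0} = {C0}" using sub C0c by blast
      then show ?thesis by simp
    qed
    then show "finite {C \<in> chain_classes. t C \<noteq> 0} \<and> b \<alpha> \<beta> x y = sum t {C \<in> chain_classes. t C \<noteq> 0}"
      using tC0 sub finite_subset by (metis finite.emptyI finite_insert)
  qed
qed

end

theorem mainTheorem18:
  fixes b :: "('a::order \<Rightarrow> 'a \<Rightarrow> 'r::comm_ring_1) \<Rightarrow> ('a \<Rightarrow> 'a \<Rightarrow> 'r) \<Rightarrow> ('a \<Rightarrow> 'a \<Rightarrow> 'r)"
  assumes "locally_finite TYPE('a)"
    and "\<exists>u v w::'a. u \<noteq> v \<and> v \<noteq> w \<and> u \<noteq> w"
    and "\<forall>l::'a set. maximal_chain l \<longrightarrow> infinite l"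
    and "additive_biderivation b"
  shows "\<exists>lam::'a set set \<Rightarrow> 'r. \<forall>\<alpha>\<in>incidence. \<forall>\<beta>\<in>incidence. \<forall>x y.
     (let t = (\<lambda>C. lam C * inc_comm (restrict_inc (class_support C) \<alpha>)
                                  (restrict_inc (class_support C) \<beta>) x y)
      in finite {C\<in>chain_classes. t C \<noteq> 0} \<and>
         b \<alpha> \<beta> x y = (\<Sum>C\<in>{C\<in>chain_classes. t C \<noteq> 0}. t C))"
proof -
  interpret BD b
    using assms by (unfold_locales) (auto simp: locally_finite_def)
  show ?thesis using mainlem by blast
qed

end
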